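(* Let $n\ge 3$ and $h$ be integers with $1\le h\le n-2$, and let $\delta>1$. Let $D$ be the real symmetric $(n-1)\times(n-1)$ block matrix \[ D=\begin{bmatrix}(-3+\delta^2)J_h & -(1+\delta^2)J_{h,n-h-1}\\ -(1+\delta^2)J_{n-h-1,h} & (1-3\delta^2)J_{n-h-1}\end{bmatrix}, \] where $J_{p,q}$ is the $p\times q$ all-ones matrix and $J_p=J_{p,p}$. Then the spectrum of $D$ is $\{[a_2],[0]^{n-3},[a_1]\}$ (exponents denote multiplicities) with $a_2<0<a_1$, where for $i=1,2$ \[ a_i=-2(1-\delta^2)h+\frac{1-3\delta^2}{2}(n-1)+(-1)^{i+1}\sqrt{2(n-1)h(1-\delta^2)(1+\delta^2)+(n-1)^2\left(\frac{1-3\delta^2}{2}\right)^2}. \] *)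

theory Defs
  imports Complex_Main "Jordan_Normal_Form.Char_Poly"
begin

definition Dmat :: "nat \<Rightarrow> nat \<Rightarrow> real \<Rightarrow> real mat" where
  "Dmat n h \<delta> = mat (n - 1) (n - 1) (\<lambda>(i, j).
     if i < h \<and> j < h then -3 + \<delta>^2
     else if h \<le> i \<and> h \<le> j then 1 - 3 * \<delta>^2
     else -(1 + \<delta>^2))"

definition a_val :: "nat \<Rightarrow> nat \<Rightarrow> real \<Rightarrow> nat \<Rightarrow> real" where
  "a_val n h \<delta> i = -2 * (1 - \<delta>^2) * real h + (1 - 3 * \<delta>^2) / 2 * (real n - 1)
     + (-1) ^ (i + 1) * sqrt (2 * (real n - 1) * real h * (1 - \<delta>^2) * (1 + \<delta>^2)
                             + (real n - 1)^2 * ((1 - 3 * \<delta>^2) / 2)^2)"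

end

theory Submission
  imports Defs
begin
lemma sylv:
  fixes U :: "'a::idom mat"
  assumes U: "U \<in> carrier_mat m k" and W: "W \<in> carrier_mat k m"
  shows "x^k * det (x \<cdot>\<^sub>m 1\<^sub>m m - U * W) = x^m * det (x \<cdot>\<^sub>m 1\<^sub>m k - W * U)"
proof -
  define M where "M = four_block_mat (x \<cdot>\<^sub>m 1\<^sub>m m) U W (1\<^sub>m k)"
  have UW: "U * W \<in> carrier_mat m m" and WU: "W * U \<in> carrier_mat k k" using U W by auto
  have A: "x \<cdot>\<^sub>m 1\<^sub>m m - U * W \<in> carrier_mat m m" by (rule minus_carrier_mat[OF UW])
  have B: "x \<cdot>\<^sub>m 1\<^sub>m k - W * U \<in> carrier_mat k k" by (rule minus_carrier_mat[OF WU])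
  have e1: "four_block_mat (1\<^sub>m m) U (0\<^sub>m k m) (1\<^sub>m k) *
                 four_block_mat (x \<cdot>\<^sub>m 1\<^sub>m m - U * W) (0\<^sub>m m k) W (1\<^sub>m k) = M"
    unfolding M_def
    apply (subst mult_four_block_mat[OF one_carrier_mat U zero_carrier_mat one_carrier_mat A zero_carrier_mat W one_carrier_mat])
    apply (rule cong_four_block_mat)
    using U W UW by (auto intro!: eq_matI)
  have e2: "four_block_mat (1\<^sub>m m) (0\<^sub>m m k) (-W) (x \<cdot>\<^sub>m 1\<^sub>m k) * M = 
            four_block_mat (x \<cdot>\<^sub>m 1\<^sub>m m) U (0\<^sub>m k m) (x \<cdot>\<^sub>m 1\<^sub>m k - W * U)"
    unfolding M_def
    apply (subst mult_four_block_mat[OF one_carrier_mat zero_carrier_mat _ smult_carrier_mat[OF one_carrier_mat] smult_carrier_mat[OF one_carrier_mat] U W one_carrier_mat])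
    using W apply simp
    apply (rule cong_four_block_mat)
    using U W WU by (auto intro!: eq_matI)
  have d1: "det (four_block_mat (1\<^sub>m m) U (0\<^sub>m k m) (1\<^sub>m k)) = 1"
    by (subst det_four_block_mat_lower_left_zero[OF one_carrier_mat U refl one_carrier_mat]) simp
  have d2: "det (four_block_mat (x \<cdot>\<^sub>m 1\<^sub>m m - U * W) (0\<^sub>m m k) W (1\<^sub>m k)) = det (x \<cdot>\<^sub>m 1\<^sub>m m - U * W)"
    by (subst det_four_block_mat_upper_right_zero[OF A refl W one_carrier_mat]) simp
  have d3: "det (four_block_mat (1\<^sub>m m) (0\<^sub>m m k) (-W) (x \<cdot>\<^sub>m 1\<^sub>m k)) = x^k"
    by (subst det_four_block_mat_upper_right_zero[OF one_carrier_mat refl _ smult_carrier_mat[OF one_carrier_mat]]) (use W in auto)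
  have d4: "det (four_block_mat (x \<cdot>\<^sub>m 1\<^sub>m m) U (0\<^sub>m k m) (x \<cdot>\<^sub>m 1\<^sub>m k - W * U)) = x^m * det (x \<cdot>\<^sub>m 1\<^sub>m k - W * U)"
    by (subst det_four_block_mat_lower_left_zero[OF smult_carrier_mat[OF one_carrier_mat] U refl B]) simp
  have Mc: "M \<in> carrier_mat (m+k) (m+k)" unfolding M_def using U W by auto
  have "det M = det (x \<cdot>\<^sub>m 1\<^sub>m m - U * W)"
    unfolding e1[symmetric] using d1 d2 A U W by (subst det_mult[of _ "m+k"]) auto
  moreover have "x^k * det M = x^m * det (x \<cdot>\<^sub>m 1\<^sub>m k - W * U)"
    using arg_cong[OF e2, of det] d3 d4 Mc W by (subst (asm) det_mult[of _ "m+k"]) auto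
  ultimately show ?thesis by simp
qed

lemma det2: assumes "A \<in> carrier_mat 2 2"
  shows "det A = A$$(0,0)*A$$(1,1) - A$$(0,1)*A$$(1,0)"
proof -
  have "det A = (\<Sum>j<2. A $$ (0,j) * cofactor A 0 j)"
    using laplace_expansion_row[OF assms, of 0] by simp
  also have "\<dots> = A $$ (0,0) * cofactor A 0 0 + A $$ (0,1) * cofactor A 0 1"
    by (simp add: numeral_2_eq_2)
  finally show ?thesis using assms
    by (simp add: cofactor_def det_def' [of _ 1] mat_delete_def)
qed

lemma sum_if_lt:
  fixes a b :: "'a::comm_ring_1"
  assumes "h \<le> m"
  shows "(\<Sum>j\<in>{0..<m}. if j < h then a else b) = of_nat h * a + of_nat (m - h) * b"
  using assms
proof (induction m)
  case 0 then show ?case by simp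
next
  case (Suc m)
  show ?case
  proof (cases "h = Suc m")
    case True
    then have "(\<Sum>j\<in>{0..<Suc m}. if j < h then a else b) = (\<Sum>j\<in>{0..<Suc m}. a)"
      by (intro sum.cong) auto
    then show ?thesis using True by simp
  next
    case False
    then have "h \<le> m" using Suc.prems by simp
    then show ?thesis using Suc.IH by (simp add: Suc_diff_le algebra_simps)
  qed
qed

lemma quad_poly: "[:-a, 1:] * [:-b, 1:] = [:a*b, -(a+b), (1::real):]"
  by (simp add: algebra_simps)

lemma real_part:
  fixes n h :: nat and \<delta> :: real
  assumes "n \<ge> 3" and "1 \<le> h" and "h \<le> n - 2" and "\<delta> > 1"
  defines "(m::real) \<equiv> real n - 1" and "(k::real) \<equiv> real n - 1 - real h"
  defines "\<alpha> \<equiv> \<delta>^2 - 3" and "\<beta> \<equiv> 1 - 3*\<delta>^2" and "\<gamma> \<equiv> -(1+\<delta>^2)"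
  shows "a_val n h \<delta> 2 * a_val n h \<delta> 1 = (real h*\<alpha>) * (k*\<beta>) - (k*\<gamma>) * (real h*\<gamma>)"
    and "a_val n h \<delta> 2 + a_val n h \<delta> 1 = real h*\<alpha> + k*\<beta>"
    and "a_val n h \<delta> 2 < 0" and "0 < a_val n h \<delta> 1"
proof -
  define d where "d = \<delta>^2"
  have d1: "d > 1" unfolding d_def using assms(4) by (simp add: one_less_power)
  have k1: "k \<ge> 1" unfolding k_def using assms(1,3) by linarith
  have h1: "real h \<ge> 1" using assms(2) by simp
  define A where "A = -2 * (1 - d) * real h + (1 - 3 * d) / 2 * m"
  define S where "S = 2 * m * real h * (1 - d) * (1 + d) + m^2 * ((1 - 3 * d) / 2)^2"
  have SA: "S = A^2 + 4*(1-d)^2*h*k"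
    unfolding S_def A_def k_def m_def by (simp add: power2_eq_square algebra_simps)
  have pos: "4*(1-d)^2*h*k > 0" using d1 k1 h1 by simp
  have S0: "S \<ge> 0" using SA pos by (smt (verit) zero_le_power2)
  have av1: "a_val n h \<delta> 1 = A + sqrt S" unfolding a_val_def A_def S_def m_def d_def by simp
  have av2: "a_val n h \<delta> 2 = A - sqrt S" unfolding a_val_def A_def S_def m_def d_def by simp
  have sq: "sqrt S ^ 2 = S" using S0 by simp
  have gt: "sqrt S > \<bar>A\<bar>"
    using SA pos by (metis add_less_same_cancel1 not_less real_sqrt_abs real_sqrt_less_mono
        less_add_same_cancel1)
  show "a_val n h \<delta> 2 * a_val n h \<delta> 1 = (real h*\<alpha>) * (k*\<beta>) - (k*\<gamma>) * (real h*\<gamma>)"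
  proof -
    have "a_val n h \<delta> 2 * a_val n h \<delta> 1 = A^2 - S" unfolding av1 av2 using sq
      by (simp add: power2_eq_square algebra_simps)
    also have "\<dots> = (real h*\<alpha>) * (k*\<beta>) - (k*\<gamma>) * (real h*\<gamma>)"
      unfolding SA \<alpha>_def \<beta>_def \<gamma>_def d_def by (simp add: power2_eq_square algebra_simps)
    finally show ?thesis .
  qed
  show "a_val n h \<delta> 2 + a_val n h \<delta> 1 = real h*\<alpha> + k*\<beta>"
    unfolding av1 av2 A_def \<alpha>_def \<beta>_def k_def m_def d_def by (simp add: algebra_simps)
  show "a_val n h \<delta> 2 < 0" "0 < a_val n h \<delta> 1" unfolding av1 av2 using gt by linarith+
qed


theorem mainTheorem4:
  fixes n h :: nat and \<delta> :: real
  assumes "n \<ge> 3" and "1 \<le> h" and "h \<le> n - 2" and "\<delta> > 1"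
  shows "char_poly (Dmat n h \<delta>) =
           [:- a_val n h \<delta> 2, 1:] * [:0, 1:] ^ (n - 3) * [:- a_val n h \<delta> 1, 1:]
         \<and> a_val n h \<delta> 2 < 0 \<and> 0 < a_val n h \<delta> 1"
proof -
  define m where "m = n - 1"
  define x :: "real poly" where "x = [:0,1:]"
  define \<alpha> where "\<alpha> = \<delta>^2 - 3"
  define \<beta> where "\<beta> = 1 - 3*\<delta>^2"
  define \<gamma> where "\<gamma> = -(1+\<delta>^2)"
  define Up :: "real poly mat" where "Up = mat m 2 (\<lambda>(i,l). if (l=0) = (i<h) then 1 else 0)"
  define Wp :: "real poly mat" where "Wp = mat 2 m (\<lambda>(l,j). if l = 0 then (if j<h then [:\<alpha>:] else [:\<gamma>:])
     else (if j<h then [:\<gamma>:] else [:\<beta>:]))"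
  have Uc: "Up \<in> carrier_mat m 2" unfolding Up_def by simp
  have Wc: "Wp \<in> carrier_mat 2 m" unfolding Wp_def by simp
  have hm: "h \<le> m" unfolding m_def using assms by simp
  have Dc: "Dmat n h \<delta> \<in> carrier_mat m m" unfolding Dmat_def m_def by simp
  have CP: "char_poly_matrix (Dmat n h \<delta>) = x \<cdot>\<^sub>m 1\<^sub>m m - Up * Wp"
  proof (rule eq_matI)
    fix i j assume i: "i < dim_row (x \<cdot>\<^sub>m 1\<^sub>m m - Up * Wp)" and j: "j < dim_col (x \<cdot>\<^sub>m 1\<^sub>m m - Up * Wp)"
    then have i': "i < m" and j': "j < m" using Uc Wc by auto
    have "(Up * Wp) $$ (i,j) = (\<Sum>l\<in>{0..<2}. Up $$ (i,l) * Wp $$ (l,j))"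
      using i' j' Uc Wc by (simp add: scalar_prod_def)
    also have "\<dots> = Up $$ (i,0) * Wp $$ (0,j) + Up $$ (i,1) * Wp $$ (1,j)"
      by (simp add: numeral_2_eq_2)
    also have "\<dots> = [: Dmat n h \<delta> $$ (i,j) :]"
      using i' j' unfolding Up_def Wp_def Dmat_def m_def \<alpha>_def \<beta>_def \<gamma>_def by auto
    finally have e: "(Up * Wp) $$ (i,j) = [: Dmat n h \<delta> $$ (i,j) :]" .
    have r: "(x \<cdot>\<^sub>m 1\<^sub>m m - Up * Wp) $$ (i,j) = (if i = j then x else 0) - [: Dmat n h \<delta> $$ (i,j) :]"
      using i' j' Uc Wc e by simp
    have l: "char_poly_matrix (Dmat n h \<delta>) $$ (i, j) = (if i = j then x else 0) + [: - Dmat n h \<delta> $$ (i,j) :]"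
      using i' j' Dc unfolding char_poly_matrix_def x_def by simp
    show "char_poly_matrix (Dmat n h \<delta>) $$ (i, j) = (x \<cdot>\<^sub>m 1\<^sub>m m - Up * Wp) $$ (i, j)"
      unfolding l r by simp
  qed (use Uc Wc Dc in \<open>auto simp: char_poly_matrix_def\<close>)
  define kk where "kk = m - h"
  have WUc: "Wp * Up \<in> carrier_mat 2 2" using Uc Wc by simp
  have ent: "(Wp * Up) $$ (l, l') = (\<Sum>j\<in>{0..<m}. Wp $$ (l,j) * Up $$ (j,l'))"
    if "l < 2" "l' < 2" for l l'
    using that Uc Wc by (simp add: scalar_prod_def)
  have cpoly: "of_nat c * [:a:] = [:real c * a:]" for c a
    by (simp add: of_nat_poly)
  have w00: "(Wp * Up) $$ (0,0) = [:real h * \<alpha>:]"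
  proof -
    have "(Wp * Up) $$ (0,0) = (\<Sum>j\<in>{0..<m}. Wp $$ (0,j) * Up $$ (j,0))" by (rule ent) simp_all
    also have "\<dots> = (\<Sum>j\<in>{0..<m}. if j < h then [:\<alpha>:] else 0)"
      by (intro sum.cong) (auto simp: Up_def Wp_def)
    finally have "(Wp * Up) $$ (0,0) = (\<Sum>j\<in>{0..<m}. if j < h then [:\<alpha>:] else 0)" .
    then show ?thesis by (simp only: sum_if_lt[OF hm] cpoly mult_zero_right add_0_right)
  qed
  have w01: "(Wp * Up) $$ (0,1) = [:real kk * \<gamma>:]"
  proof -
    have "(Wp * Up) $$ (0,1) = (\<Sum>j\<in>{0..<m}. Wp $$ (0,j) * Up $$ (j,1))" by (rule ent) simp_all
    also have "\<dots> = (\<Sum>j\<in>{0..<m}. if j < h then 0 else [:\<gamma>:])"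
      by (intro sum.cong) (auto simp: Up_def Wp_def)
    finally have "(Wp * Up) $$ (0,1) = (\<Sum>j\<in>{0..<m}. if j < h then 0 else [:\<gamma>:])" .
    then show ?thesis unfolding kk_def by (simp only: sum_if_lt[OF hm] cpoly mult_zero_right add_0_left)
  qed
  have w10: "(Wp * Up) $$ (1,0) = [:real h * \<gamma>:]"
  proof -
    have "(Wp * Up) $$ (1,0) = (\<Sum>j\<in>{0..<m}. Wp $$ (1,j) * Up $$ (j,0))" by (rule ent) simp_all
    also have "\<dots> = (\<Sum>j\<in>{0..<m}. if j < h then [:\<gamma>:] else 0)"
      by (intro sum.cong) (auto simp: Up_def Wp_def)
    finally have "(Wp * Up) $$ (1,0) = (\<Sum>j\<in>{0..<m}. if j < h then [:\<gamma>:] else 0)" .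
    then show ?thesis by (simp only: sum_if_lt[OF hm] cpoly mult_zero_right add_0_right)
  qed
  have w11: "(Wp * Up) $$ (1,1) = [:real kk * \<beta>:]"
  proof -
    have "(Wp * Up) $$ (1,1) = (\<Sum>j\<in>{0..<m}. Wp $$ (1,j) * Up $$ (j,1))" by (rule ent) simp_all
    also have "\<dots> = (\<Sum>j\<in>{0..<m}. if j < h then 0 else [:\<beta>:])"
      by (intro sum.cong) (auto simp: Up_def Wp_def)
    finally have "(Wp * Up) $$ (1,1) = (\<Sum>j\<in>{0..<m}. if j < h then 0 else [:\<beta>:])" .
    then show ?thesis unfolding kk_def by (simp only: sum_if_lt[OF hm] cpoly mult_zero_right add_0_left)
  qed
  have kkr: "real kk = real n - 1 - real h" unfolding kk_def m_def using assms by simp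
  note RP = real_part[OF assms, folded \<alpha>_def \<beta>_def \<gamma>_def, folded kkr]
  have d2: "det (x \<cdot>\<^sub>m 1\<^sub>m 2 - Wp * Up) = [:- a_val n h \<delta> 2, 1:] * [:- a_val n h \<delta> 1, 1:]"
  proof -
    have c: "x \<cdot>\<^sub>m 1\<^sub>m 2 - Wp * Up \<in> carrier_mat 2 2" by (rule minus_carrier_mat[OF WUc])
    have "det (x \<cdot>\<^sub>m 1\<^sub>m 2 - Wp * Up) = (x - [:real h * \<alpha>:]) * (x - [:real kk * \<beta>:])
         - [:real kk * \<gamma>:] * [:real h * \<gamma>:]"
      unfolding det2[OF c] using carrier_matD[OF Uc] carrier_matD[OF Wc] w00 w01 w10 w11 by (simp add: numeral_2_eq_2)
    also have "\<dots> = [: (real h * \<alpha>) * (real kk * \<beta>) - (real kk * \<gamma>) * (real h * \<gamma>),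
                      - (real h * \<alpha> + real kk * \<beta>), 1:]"
      unfolding x_def by simp
    also have "\<dots> = [:- a_val n h \<delta> 2, 1:] * [:- a_val n h \<delta> 1, 1:]"
      unfolding quad_poly RP(1) RP(2) ..
    finally show ?thesis .
  qed
  have S: "x^2 * char_poly (Dmat n h \<delta>) = x^m * ([:- a_val n h \<delta> 2, 1:] * [:- a_val n h \<delta> 1, 1:])"
    unfolding char_poly_def CP d2[symmetric] by (rule sylv[OF Uc Wc])
  define Q where "Q = [:- a_val n h \<delta> 2, 1:] * [:- a_val n h \<delta> 1, 1:]"
  have mm: "m = 2 + (n - 3)" unfolding m_def using assms by simp
  have "x^2 * char_poly (Dmat n h \<delta>) = x^2 * (x^(n-3) * Q)"
    using S unfolding Q_def[symmetric] mm power_add mult.assoc .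
  then have "char_poly (Dmat n h \<delta>) = x^(n-3) * Q"
    unfolding x_def by (subst (asm) mult_left_cancel) simp_all
  then have "char_poly (Dmat n h \<delta>) = x^(n-3) * ([:- a_val n h \<delta> 2, 1:] * [:- a_val n h \<delta> 1, 1:])"
    unfolding Q_def .
  then have "char_poly (Dmat n h \<delta>) = [:- a_val n h \<delta> 2, 1:] * [:0, 1:] ^ (n - 3) * [:- a_val n h \<delta> 1, 1:]"
    unfolding x_def by (simp only: ac_simps)
  then show ?thesis using RP(3,4) by blast
qed

end
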